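(* Let $(S,* )$ be a finite cycle set of class $d$ with permutation group $\mathcal G$. Then $d$ and $|\mathcal G|$ have the same set of prime divisors. In particular, $d$ is a prime power if and only if $|\mathcal G|$ is a prime power.
   Context: A cycle set is a set $S$ with a binary operation $*$ such that each $t\mapsto s*t$ is bijective and $(s*t)*(s*u)=(t*s)*(t*u)$ for all $s,t,u$. Write $S=\{s_1,\dots,s_n\}$, let $\psi(s)\in\mathfrak S_n$ satisfy $s_i*s_j=s_{\psi(s_i)(j)}$, and $\mathcal G=\langle\psi(s_1),\dots,\psi(s_n)\rangle\le\mathfrak S_n$. With $T(s)=s*s$ and $\psi_k(s)=\psi(T^{k-1}(s))\circ\cdots\circ\psi(s)$, the class $d$ is the least integer $d\ge1$ with $\psi_d(s)=\mathrm{id}$ for all $s\in S$. *)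

theory Defs
  imports "HOL-Algebra.Generated_Groups" "HOL-Algebra.Bij" "HOL-Number_Theory.Prime_Powers"
begin

definition cycle_set :: "'a set \<Rightarrow> ('a \<Rightarrow> 'a \<Rightarrow> 'a) \<Rightarrow> bool" where
  "cycle_set S op \<longleftrightarrow>
     (\<forall>s\<in>S. bij_betw (op s) S S) \<and>
     (\<forall>s\<in>S. \<forall>t\<in>S. \<forall>u\<in>S. op (op s t) (op s u) = op (op t s) (op t u))"

definition psi :: "'a set \<Rightarrow> ('a \<Rightarrow> 'a \<Rightarrow> 'a) \<Rightarrow> 'a \<Rightarrow> ('a \<Rightarrow> 'a)" where
  "psi S op s = (\<lambda>t\<in>S. op s t)"

definition perm_group :: "'a set \<Rightarrow> ('a \<Rightarrow> 'a \<Rightarrow> 'a) \<Rightarrow> ('a \<Rightarrow> 'a) set" where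
  "perm_group S op = generate (BijGroup S) (psi S op ` S)"

definition sq_map :: "('a \<Rightarrow> 'a \<Rightarrow> 'a) \<Rightarrow> 'a \<Rightarrow> 'a" where
  "sq_map op s = op s s"

fun psik :: "'a set \<Rightarrow> ('a \<Rightarrow> 'a \<Rightarrow> 'a) \<Rightarrow> nat \<Rightarrow> 'a \<Rightarrow> ('a \<Rightarrow> 'a)" where
  "psik S op 0 s = (\<lambda>x\<in>S. x)"
| "psik S op (Suc k) s = compose S (psi S op ((sq_map op ^^ k) s)) (psik S op k s)"

definition is_class :: "'a set \<Rightarrow> ('a \<Rightarrow> 'a \<Rightarrow> 'a) \<Rightarrow> nat \<Rightarrow> bool" where
  "is_class S op d \<longleftrightarrow>
     d = (LEAST d. d \<ge> 1 \<and> (\<forall>s\<in>S. psik S op d s = (\<lambda>x\<in>S. x)))"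

end

theory Submission
  imports Defs "HOL-Library.Multiset" "HOL-Algebra.Sylow" "HOL-Algebra.Multiplicative_Group"
begin

fun Phi :: "'a set \<Rightarrow> ('a \<Rightarrow> 'a \<Rightarrow> 'a) \<Rightarrow> 'a list \<Rightarrow> ('a \<Rightarrow> 'a)" where
  "Phi S op [] = (\<lambda>x\<in>S. x)"
| "Phi S op (s # xs) = compose S (Phi S op (map (op s) xs)) (psi S op s)"

locale cs =
  fixes S :: "'a set" and op :: "'a \<Rightarrow> 'a \<Rightarrow> 'a"
  assumes fin: "finite S" and cyc: "cycle_set S op"
begin

lemma bij_op: "s \<in> S \<Longrightarrow> bij_betw (op s) S S"
  using cyc unfolding cycle_set_def by blast

lemma op_in: "s \<in> S \<Longrightarrow> t \<in> S \<Longrightarrow> op s t \<in> S"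
  using bij_op bij_betwE by blast

lemma cyc_id: "s \<in> S \<Longrightarrow> t \<in> S \<Longrightarrow> u \<in> S \<Longrightarrow> op (op s t) (op s u) = op (op t s) (op t u)"
  using cyc unfolding cycle_set_def by blast

lemma psi_Bij: "s \<in> S \<Longrightarrow> psi S op s \<in> Bij S"
  unfolding psi_def Bij_def using bij_op by simp

lemma Phi_ext: "Phi S op xs \<in> extensional S"
  by (cases xs) (simp_all add: compose_def)

lemma Phi_out: "x \<notin> S \<Longrightarrow> Phi S op xs x = undefined"
  by (rule extensional_arb[OF Phi_ext])

lemma Phi_Nil_app: "x \<in> S \<Longrightarrow> Phi S op [] x = x"
  by simp

lemma Phi_Cons_app: "x \<in> S \<Longrightarrow> Phi S op (s # xs) x = Phi S op (map (op s) xs) (op s x)"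
  by (simp add: compose_eq psi_def)

lemma map_op_sub: "s \<in> S \<Longrightarrow> set xs \<subseteq> S \<Longrightarrow> set (map (op s) xs) \<subseteq> S"
  using op_in by auto

lemma Phi_Bij: "set xs \<subseteq> S \<Longrightarrow> Phi S op xs \<in> Bij S"
proof (induction "length xs" arbitrary: xs)
  case 0
  then show ?case by (metis Phi.simps(1) id_Bij length_0_conv)
next
  case (Suc n)
  then obtain s ys where xs: "xs = s # ys" by (cases xs) auto
  have "Phi S op (map (op s) ys) \<in> Bij S"
    using Suc xs map_op_sub by auto
  moreover have "s \<in> S" using Suc xs by auto
  ultimately show ?case using xs compose_Bij[OF _ psi_Bij] by simp
qed

lemma Phi_in: "set xs \<subseteq> S \<Longrightarrow> x \<in> S \<Longrightarrow> Phi S op xs x \<in> S"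
  using Phi_Bij Bij_imp_funcset by blast

lemma Phi_eqI: "(\<And>x. x \<in> S \<Longrightarrow> Phi S op xs x = Phi S op ys x) \<Longrightarrow> Phi S op xs = Phi S op ys"
  by (rule extensionalityI[OF Phi_ext Phi_ext])

lemma Phi_swap:
  assumes "s \<in> S" "t \<in> S" "set xs \<subseteq> S"
  shows "Phi S op (s # t # xs) = Phi S op (t # s # xs)"
proof (rule Phi_eqI)
  fix x assume x: "x \<in> S"
  have m: "map (op (op s t)) (map (op s) xs) = map (op (op t s)) (map (op t) xs)"
    using assms cyc_id by auto
  have "Phi S op (s # t # xs) x = Phi S op (map (op (op s t)) (map (op s) xs)) (op (op s t) (op s x))"
    using x assms op_in by (simp add: Phi_Cons_app Phi_Nil_app del: Phi.simps)
  also have "\<dots> = Phi S op (map (op (op t s)) (map (op t) xs)) (op (op t s) (op t x))"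
    by (simp only: m cyc_id[OF assms(1,2) x])
  also have "\<dots> = Phi S op (t # s # xs) x"
    using x assms op_in by (simp add: Phi_Cons_app Phi_Nil_app del: Phi.simps)
  finally show "Phi S op (s # t # xs) x = Phi S op (t # s # xs) x" .
qed

lemma Phi_perm:
  "mset xs = mset ys \<Longrightarrow> set xs \<subseteq> S \<Longrightarrow> Phi S op xs = Phi S op ys"
proof (induction "length xs" arbitrary: xs ys rule: less_induct)
  case less
  note IH = less.hyps
  have mxy: "mset xs = mset ys" and xsS: "set xs \<subseteq> S" using less.prems by auto
  show ?case
  proof (cases xs)
    case Nil
    then show ?thesis using mxy by simp
  next
    case (Cons x xs')
    obtain y ys' where ys: "ys = y # ys'" using mxy Cons
      by (cases ys) auto
    have xS: "x \<in> S" and xs'S: "set xs' \<subseteq> S" using xsS Cons by auto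
    show ?thesis
    proof (cases "x = y")
      case True
      then have "mset xs' = mset ys'" using mxy Cons ys by simp
      then have m2: "mset (map (op x) xs') = mset (map (op x) ys')" by simp
      have "Phi S op (map (op x) xs') = Phi S op (map (op x) ys')"
        by (rule IH[OF _ m2 map_op_sub[OF xS xs'S]]) (simp add: Cons)
      then show ?thesis using Cons ys True by simp
    next
      case False
      have "y \<in> set ys" using ys by simp
      then have "y \<in> set xs" using mset_eq_setD[OF mxy] by simp
      then have yxs': "y \<in> set xs'" using Cons False by simp
      define zs where "zs = remove1 y xs'"
      have zs: "mset xs' = mset (y # zs)"
        using yxs' by (simp add: zs_def insert_DiffM)
      have yS: "y \<in> S" using yxs' xs'S by auto
      have zsS: "set zs \<subseteq> S" unfolding zs_def using set_remove1_subset[of y xs'] xs'S by (rule order_trans)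
      have lzs: "length zs < length xs'" using yxs' length_pos_if_in_set[OF yxs'] unfolding zs_def
        by (simp add: length_remove1)
      have m3: "mset (map (op x) xs') = mset (map (op x) (y # zs))"
        by (simp only: mset_map zs)
      have e1: "Phi S op (map (op x) xs') = Phi S op (map (op x) (y # zs))"
        by (rule IH[OF _ m3 map_op_sub[OF xS xs'S]]) (simp add: Cons)
      have "Phi S op xs = Phi S op (x # y # zs)" using Cons e1 by simp
      also have "\<dots> = Phi S op (y # x # zs)" by (rule Phi_swap[OF xS yS zsS])
      also have "\<dots> = Phi S op ys"
      proof -
        have "mset (x # zs) = mset ys'" using mxy Cons ys zs by simp
        then have m4: "mset (map (op y) (x # zs)) = mset (map (op y) ys')" by (simp only: mset_map)
        have s4: "set (map (op y) (x # zs)) \<subseteq> S" using yS xS zsS op_in by auto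
        have "Phi S op (map (op y) (x # zs)) = Phi S op (map (op y) ys')"
          by (rule IH[OF _ m4 s4]) (use lzs Cons in simp)
        then show ?thesis using ys by simp
      qed
      finally show ?thesis .
    qed
  qed
qed

lemma Phi_app_pt:
  "set xs \<subseteq> S \<Longrightarrow> set ys \<subseteq> S \<Longrightarrow> x \<in> S \<Longrightarrow>
   Phi S op (xs @ ys) x = Phi S op (map (Phi S op xs) ys) (Phi S op xs x)"
proof (induction "length xs" arbitrary: xs ys x rule: less_induct)
  case less
  have xsS: "set xs \<subseteq> S" and ysS: "set ys \<subseteq> S" and xS: "x \<in> S" using less.prems by auto
  show ?case
  proof (cases xs)
    case Nil
    have "map (Phi S op []) ys = ys" using ysS by (intro map_idI) auto
    then show ?thesis using Nil xS by simp
  next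
    case (Cons a xs')
    have aS: "a \<in> S" and xs'S: "set xs' \<subseteq> S" using xsS Cons by auto
    have IH: "Phi S op (map (op a) xs' @ map (op a) ys) (op a x) =
      Phi S op (map (Phi S op (map (op a) xs')) (map (op a) ys)) (Phi S op (map (op a) xs') (op a x))"
    proof (rule less.hyps)
      show "length (map (op a) xs') < length xs" using Cons by simp
      show "set (map (op a) xs') \<subseteq> S" by (rule map_op_sub[OF aS xs'S])
      show "set (map (op a) ys) \<subseteq> S" by (rule map_op_sub[OF aS ysS])
      show "op a x \<in> S" by (rule op_in[OF aS xS])
    qed
    have m: "map (Phi S op (a # xs')) ys = map (Phi S op (map (op a) xs')) (map (op a) ys)"
      using ysS by (auto simp: Phi_Cons_app simp del: Phi.simps)
    have "Phi S op (xs @ ys) x = Phi S op (map (op a) xs' @ map (op a) ys) (op a x)"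
      using Cons xS by (simp add: Phi_Cons_app Phi_Nil_app del: Phi.simps)
    also have "\<dots> = Phi S op (map (Phi S op (map (op a) xs')) (map (op a) ys)) (Phi S op (map (op a) xs') (op a x))"
      by (rule IH)
    also have "\<dots> = Phi S op (map (Phi S op xs) ys) (Phi S op xs x)"
      unfolding Cons m[symmetric] by (simp only: Phi_Cons_app[OF xS])
    finally show ?thesis .
  qed
qed

lemma Phi_cong_l:
  assumes "set xs \<subseteq> S" "set xs' \<subseteq> S" "set ys \<subseteq> S" "Phi S op xs = Phi S op xs'"
  shows "Phi S op (xs @ ys) = Phi S op (xs' @ ys)"
proof (rule Phi_eqI)
  fix x assume "x \<in> S"
  then show "Phi S op (xs @ ys) x = Phi S op (xs' @ ys) x"
    using Phi_app_pt[OF assms(1,3)] Phi_app_pt[OF assms(2,3)] assms(4) by simp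
qed

lemma Phi_comm:
  assumes "set xs \<subseteq> S" "set ys \<subseteq> S"
  shows "Phi S op (xs @ ys) = Phi S op (ys @ xs)"
  by (rule Phi_perm) (use assms in \<open>simp_all add: add.commute\<close>)

lemma Phi_cong_r:
  assumes "set xs \<subseteq> S" "set ys \<subseteq> S" "set ys' \<subseteq> S" "Phi S op ys = Phi S op ys'"
  shows "Phi S op (xs @ ys) = Phi S op (xs @ ys')"
proof -
  have "Phi S op (xs @ ys) = Phi S op (ys @ xs)" by (rule Phi_comm[OF assms(1,2)])
  also have "\<dots> = Phi S op (ys' @ xs)" by (rule Phi_cong_l[OF assms(2,3,1,4)])
  also have "\<dots> = Phi S op (xs @ ys')" by (rule Phi_comm[OF assms(3,1)])
  finally show ?thesis .
qed

lemma Phi_image: "set xs \<subseteq> S \<Longrightarrow> Phi S op xs ` S = S"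
  using Phi_Bij unfolding Bij_def by (simp add: bij_betw_def)

lemma Phi_surj: "set xs \<subseteq> S \<Longrightarrow> y \<in> S \<Longrightarrow> \<exists>x\<in>S. Phi S op xs x = y"
  using Phi_image by (metis imageE)

lemma Phi_inv:
  assumes zs: "set zs \<subseteq> S" and a: "set a \<subseteq> S" and b: "set b \<subseteq> S"
    and e: "Phi S op a = Phi S op b"
  shows "Phi S op (map (Phi S op zs) a) = Phi S op (map (Phi S op zs) b)"
proof (rule Phi_eqI)
  fix y assume "y \<in> S"
  then obtain x where x: "x \<in> S" "Phi S op zs x = y" using Phi_surj[OF zs] by blast
  have "Phi S op (zs @ a) = Phi S op (zs @ b)" by (rule Phi_cong_r[OF zs a b e])
  then have "Phi S op (zs @ a) x = Phi S op (zs @ b) x" by simp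
  then show "Phi S op (map (Phi S op zs) a) y = Phi S op (map (Phi S op zs) b) y"
    using Phi_app_pt[OF zs a x(1)] Phi_app_pt[OF zs b x(1)] x(2) by simp
qed

definition G where "G = Phi S op ` {xs. set xs \<subseteq> S}"

definition rep where "rep y = (SOME xs. set xs \<subseteq> S \<and> Phi S op xs = y)"

lemma G_I: "set xs \<subseteq> S \<Longrightarrow> Phi S op xs \<in> G"
  unfolding G_def by blast

lemma G_E: assumes "u \<in> G" obtains xs where "set xs \<subseteq> S" "u = Phi S op xs"
  using assms unfolding G_def by blast

lemma rep_prop: assumes "u \<in> G" shows "set (rep u) \<subseteq> S" "Phi S op (rep u) = u"
proof -
  have "\<exists>xs. set xs \<subseteq> S \<and> Phi S op xs = u" using assms G_E by metis
  then have "set (rep u) \<subseteq> S \<and> Phi S op (rep u) = u" unfolding rep_def by (rule someI_ex)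
  then show "set (rep u) \<subseteq> S" "Phi S op (rep u) = u" by auto
qed

lemma G_Bij: "G \<subseteq> Bij S"
  unfolding G_def using Phi_Bij by blast

lemma finite_Bij: "finite (Bij S)"
proof (rule finite_subset)
  show "Bij S \<subseteq> PiE S (\<lambda>_. S)"
    using Bij_imp_funcset Bij_imp_extensional unfolding PiE_def by blast
  show "finite (PiE S (\<lambda>_. S))" using fin by (simp add: finite_PiE)
qed

lemma finite_G: "finite G"
  using finite_subset[OF G_Bij finite_Bij] .

lemma map_inv_into:
  assumes "set zs \<subseteq> S" "set ys \<subseteq> S"
  shows "set (map (inv_into S (Phi S op zs)) ys) \<subseteq> S"
    "map (Phi S op zs) (map (inv_into S (Phi S op zs)) ys) = ys"
proof -
  have im: "Phi S op zs ` S = S" by (rule Phi_image[OF assms(1)])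
  show "set (map (inv_into S (Phi S op zs)) ys) \<subseteq> S"
    using assms(2) inv_into_into[of _ "Phi S op zs" S] im by auto
  show "map (Phi S op zs) (map (inv_into S (Phi S op zs)) ys) = ys"
    unfolding map_map by (rule map_idI) (use assms(2) f_inv_into_f[of _ "Phi S op zs" S] im in auto)
qed

lemma Phi_inv_rev:
  assumes zs: "set zs \<subseteq> S" and a: "set a \<subseteq> S" and b: "set b \<subseteq> S"
    and e: "Phi S op (map (Phi S op zs) a) = Phi S op (map (Phi S op zs) b)"
  shows "Phi S op a = Phi S op b"
proof -
  define g where "g = Phi S op zs"
  define F where "F y = Phi S op (map g (rep y))" for y
  have FP: "F (Phi S op c) = Phi S op (map g c)" if "set c \<subseteq> S" for c
  proof -
    have "Phi S op c \<in> G" using G_I that .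
    then show ?thesis unfolding F_def g_def using Phi_inv[OF zs rep_prop(1) that rep_prop(2)] by blast
  qed
  have "G \<subseteq> F ` G"
  proof
    fix y assume "y \<in> G"
    then obtain ys where ys: "set ys \<subseteq> S" "y = Phi S op ys" by (rule G_E)
    define c where "c = map (inv_into S g) ys"
    have cS: "set c \<subseteq> S" and mc: "map g c = ys"
      using map_inv_into[OF zs ys(1)] unfolding c_def g_def by auto
    have "F (Phi S op c) = y" using FP[OF cS] mc ys by simp
    then show "y \<in> F ` G" using G_I[OF cS] by blast
  qed
  then have "inj_on F G" using finite_surj_inj[OF finite_G] by blast
  moreover have "F (Phi S op a) = F (Phi S op b)" using FP[OF a] FP[OF b] e unfolding g_def by simp
  ultimately show ?thesis using G_I[OF a] G_I[OF b] by (auto dest: inj_onD)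
qed

lemma Phi_cancel:
  assumes xs: "set xs \<subseteq> S" and a: "set a \<subseteq> S" and b: "set b \<subseteq> S"
    and e: "Phi S op (xs @ a) = Phi S op (xs @ b)"
  shows "Phi S op a = Phi S op b"
proof (rule Phi_inv_rev[OF xs a b])
  show "Phi S op (map (Phi S op xs) a) = Phi S op (map (Phi S op xs) b)"
  proof (rule Phi_eqI)
    fix y assume "y \<in> S"
    then obtain x where x: "x \<in> S" "Phi S op xs x = y" using Phi_surj[OF xs] by blast
    have "Phi S op (xs @ a) x = Phi S op (xs @ b) x" using e by simp
    then show "Phi S op (map (Phi S op xs) a) y = Phi S op (map (Phi S op xs) b) y"
      using Phi_app_pt[OF xs a x(1)] Phi_app_pt[OF xs b x(1)] x(2) by simp
  qed
qed

definition A :: "('a \<Rightarrow> 'a) monoid" where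
  "A = \<lparr>carrier = G, monoid.mult = (\<lambda>u v. Phi S op (rep u @ rep v)), one = Phi S op []\<rparr>"

lemma A_simps: "carrier A = G" "\<one>\<^bsub>A\<^esub> = Phi S op []"
  by (simp_all add: A_def)

lemma mult_Phi:
  assumes "set xs \<subseteq> S" "set ys \<subseteq> S"
  shows "Phi S op xs \<otimes>\<^bsub>A\<^esub> Phi S op ys = Phi S op (xs @ ys)"
proof -
  have gx: "Phi S op xs \<in> G" and gy: "Phi S op ys \<in> G" using G_I assms by auto
  have "Phi S op xs \<otimes>\<^bsub>A\<^esub> Phi S op ys = Phi S op (rep (Phi S op xs) @ rep (Phi S op ys))"
    by (simp add: A_def)
  also have "\<dots> = Phi S op (xs @ rep (Phi S op ys))"
    by (rule Phi_cong_l[OF rep_prop(1)[OF gx] assms(1) rep_prop(1)[OF gy] rep_prop(2)[OF gx]])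
  also have "\<dots> = Phi S op (xs @ ys)"
    by (rule Phi_cong_r[OF assms(1) rep_prop(1)[OF gy] assms(2) rep_prop(2)[OF gy]])
  finally show ?thesis .
qed

lemma A_comm_group: "comm_group A"
proof (rule comm_groupI)
  fix x y assume "x \<in> carrier A" "y \<in> carrier A"
  then obtain xs ys where "set xs \<subseteq> S" "x = Phi S op xs" "set ys \<subseteq> S" "y = Phi S op ys"
    unfolding A_simps by (metis G_E)
  then show "x \<otimes>\<^bsub>A\<^esub> y \<in> carrier A" "x \<otimes>\<^bsub>A\<^esub> y = y \<otimes>\<^bsub>A\<^esub> x"
    using mult_Phi G_I Phi_comm unfolding A_simps by auto
next
  show "\<one>\<^bsub>A\<^esub> \<in> carrier A" unfolding A_simps by (rule G_I) simp
next
  fix x y z assume "x \<in> carrier A" "y \<in> carrier A" "z \<in> carrier A"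
  then obtain xs ys zs where "set xs \<subseteq> S" "x = Phi S op xs" "set ys \<subseteq> S" "y = Phi S op ys"
     "set zs \<subseteq> S" "z = Phi S op zs"
    unfolding A_simps by (metis G_E)
  then show "x \<otimes>\<^bsub>A\<^esub> y \<otimes>\<^bsub>A\<^esub> z = x \<otimes>\<^bsub>A\<^esub> (y \<otimes>\<^bsub>A\<^esub> z)"
    using mult_Phi by simp
next
  fix x assume "x \<in> carrier A"
  then obtain xs where "set xs \<subseteq> S" "x = Phi S op xs"
    unfolding A_simps by (metis G_E)
  then show "\<one>\<^bsub>A\<^esub> \<otimes>\<^bsub>A\<^esub> x = x" using mult_Phi[of "[]" xs] unfolding A_simps by simp
next
  fix x assume "x \<in> carrier A"
  then obtain xs where xs: "set xs \<subseteq> S" "x = Phi S op xs"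
    unfolding A_simps by (metis G_E)
  define h where "h y = y \<otimes>\<^bsub>A\<^esub> x" for y
  have hG: "h ` G \<subseteq> G"
  proof
    fix u assume "u \<in> h ` G"
    then obtain y where "y \<in> G" "u = h y" by blast
    then obtain ys where "set ys \<subseteq> S" "y = Phi S op ys" by (metis G_E)
    then show "u \<in> G" using \<open>u = h y\<close> xs mult_Phi G_I unfolding h_def by simp
  qed
  have "inj_on h G"
  proof (rule inj_onI)
    fix y y' assume "y \<in> G" "y' \<in> G" "h y = h y'"
    then obtain ys ys' where ys: "set ys \<subseteq> S" "y = Phi S op ys" "set ys' \<subseteq> S" "y' = Phi S op ys'"
      by (metis G_E)
    then have "Phi S op (ys @ xs) = Phi S op (ys' @ xs)"
      using \<open>h y = h y'\<close> xs mult_Phi unfolding h_def by simp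
    then have "Phi S op (xs @ ys) = Phi S op (xs @ ys')"
      using Phi_comm ys xs by metis
    then show "y = y'" using Phi_cancel xs ys by metis
  qed
  then have "h ` G = G" using endo_inj_surj[OF finite_G hG] by blast
  moreover have "Phi S op [] \<in> G" by (rule G_I) simp
  ultimately obtain y where "y \<in> G" "h y = Phi S op []" by (metis imageE)
  then show "\<exists>y\<in>carrier A. y \<otimes>\<^bsub>A\<^esub> x = \<one>\<^bsub>A\<^esub>" unfolding h_def A_simps by blast
qed

interpretation AG: comm_group A by (rule A_comm_group)

lemma Phi_single: "s \<in> S \<Longrightarrow> Phi S op [s] = psi S op s"
  by (rule extensionalityI[OF Phi_ext]) (auto simp: psi_def Phi_Cons_app Phi_Nil_app op_in simp del: Phi.simps)

lemma pow_single: "s \<in> S \<Longrightarrow> Phi S op [s] [^]\<^bsub>A\<^esub> k = Phi S op (replicate k s)"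
proof (induction k)
  case 0
  then show ?case by (simp add: A_simps)
next
  case (Suc k)
  have "Phi S op [s] [^]\<^bsub>A\<^esub> Suc k = Phi S op (replicate k s) \<otimes>\<^bsub>A\<^esub> Phi S op [s]"
    using Suc by simp
  also have "\<dots> = Phi S op (replicate k s @ [s])" using Suc.prems by (intro mult_Phi) auto
  also have "\<dots> = Phi S op (replicate (Suc k) s)" by (simp only: replicate_append_same replicate_Suc)
  finally show ?case .
qed

lemma rep_T: "s \<in> S \<Longrightarrow> Phi S op (replicate k s) s = (sq_map op ^^ k) s \<and> (sq_map op ^^ k) s \<in> S"
proof (induction k)
  case 0
  then show ?case by simp
next
  case (Suc k)
  define t where "t = (sq_map op ^^ k) s"
  have tS: "t \<in> S" and e: "Phi S op (replicate k s) s = t" using Suc unfolding t_def by auto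
  have rS: "set (replicate k s) \<subseteq> S" "set [s] \<subseteq> S" using Suc.prems by auto
  have "Phi S op (replicate (Suc k) s) s = Phi S op (replicate k s @ [s]) s"
    by (simp only: replicate_append_same replicate_Suc)
  also have "\<dots> = Phi S op [t] t"
    using Phi_app_pt[OF rS Suc.prems] e by simp
  also have "\<dots> = op t t" using tS op_in by (simp add: Phi_Cons_app Phi_Nil_app del: Phi.simps)
  finally have 1: "Phi S op (replicate (Suc k) s) s = op t t" .
  have "(sq_map op ^^ Suc k) s = sq_map op t" by (simp add: t_def)
  then have 2: "(sq_map op ^^ Suc k) s = op t t" by (simp add: sq_map_def)
  show ?case using 1 2 op_in[OF tS tS] by simp
qed

lemma psik_eq: "s \<in> S \<Longrightarrow> psik S op k s = Phi S op (replicate k s)"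
proof (induction k)
  case 0
  then show ?case by simp
next
  case (Suc k)
  define t where "t = (sq_map op ^^ k) s"
  have tS: "t \<in> S" and e: "Phi S op (replicate k s) s = t" using rep_T[OF Suc.prems] unfolding t_def by auto
  have rS: "set (replicate k s) \<subseteq> S" "set [s] \<subseteq> S" using Suc.prems by auto
  show ?case
  proof (rule extensionalityI[OF _ Phi_ext])
    show "psik S op (Suc k) s \<in> extensional S" by (simp add: compose_def)
    fix x assume xS: "x \<in> S"
    have inS: "Phi S op (replicate k s) x \<in> S" using Phi_in rS xS by blast
    have "Phi S op (replicate (Suc k) s) x = Phi S op (replicate k s @ [s]) x"
      by (simp only: replicate_append_same replicate_Suc)
    also have "\<dots> = Phi S op [t] (Phi S op (replicate k s) x)"
      using Phi_app_pt[OF rS xS] e by simp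
    also have "\<dots> = op t (Phi S op (replicate k s) x)" using inS tS op_in by (simp add: Phi_Cons_app Phi_Nil_app del: Phi.simps)
    also have "\<dots> = psik S op (Suc k) s x"
      using Suc xS inS by (simp add: compose_eq psi_def t_def)
    finally show "psik S op (Suc k) s x = Phi S op (replicate (Suc k) s) x" by simp
  qed
qed

lemma G_compose: assumes "u \<in> G" "v \<in> G" shows "compose S u v \<in> G"
proof -
  obtain ys where ys: "set ys \<subseteq> S" "u = Phi S op ys" using assms(1) by (rule G_E)
  obtain xs where xs: "set xs \<subseteq> S" "v = Phi S op xs" using assms(2) by (rule G_E)
  define c where "c = map (inv_into S (Phi S op xs)) ys"
  have cS: "set c \<subseteq> S" and mc: "map (Phi S op xs) c = ys"
    using map_inv_into[OF xs(1) ys(1)] unfolding c_def by auto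
  have "Phi S op (xs @ c) = compose S u v"
  proof (rule extensionalityI[OF Phi_ext])
    show "compose S u v \<in> extensional S" by (simp add: compose_def)
    fix x assume xS: "x \<in> S"
    show "Phi S op (xs @ c) x = compose S u v x"
      using Phi_app_pt[OF xs(1) cS xS] mc xS ys xs by (simp add: compose_eq)
  qed
  moreover have "set (xs @ c) \<subseteq> S" using xs cS by simp
  ultimately show ?thesis using G_I by metis
qed

lemma B_mult: "f \<in> Bij S \<Longrightarrow> g \<in> Bij S \<Longrightarrow> f \<otimes>\<^bsub>BijGroup S\<^esub> g = compose S f g"
  by (simp add: BijGroup_def)

lemma G_sub_gen: "set xs \<subseteq> S \<Longrightarrow> Phi S op xs \<in> perm_group S op"
proof (induction "length xs" arbitrary: xs)
  case 0
  then have e: "Phi S op xs = \<one>\<^bsub>BijGroup S\<^esub>" by (simp add: BijGroup_def)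
  show ?case unfolding perm_group_def e by (rule generate.one)
next
  case (Suc n)
  then obtain s ys where xs: "xs = s # ys" by (cases xs) auto
  have sS: "s \<in> S" and ysS: "set ys \<subseteq> S" using Suc xs by auto
  have IH: "Phi S op (map (op s) ys) \<in> perm_group S op"
    using Suc xs map_op_sub[OF sS ysS] by auto
  have "Phi S op xs = Phi S op (map (op s) ys) \<otimes>\<^bsub>BijGroup S\<^esub> psi S op s"
    using xs B_mult[OF Phi_Bij[OF map_op_sub[OF sS ysS]] psi_Bij[OF sS]] by simp
  then show ?case using IH unfolding perm_group_def
    by (simp only: generate.eng[OF _ generate.incl[OF imageI[OF sS]]])
qed

lemma gen_sub_G: "perm_group S op \<subseteq> G"
proof
  fix h assume "h \<in> perm_group S op"
  then have "h \<in> generate (BijGroup S) (psi S op ` S)" unfolding perm_group_def .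
  then show "h \<in> G"
  proof (induction rule: generate.induct)
    case one
    have e: "\<one>\<^bsub>BijGroup S\<^esub> = Phi S op []" by (simp add: BijGroup_def)
    show ?case unfolding e by (rule G_I) simp
  next
    case (incl h)
    then obtain s where sS: "s \<in> S" and hs: "h = psi S op s" by blast
    have "set [s] \<subseteq> S" using sS by simp
    then have "Phi S op [s] \<in> G" by (rule G_I)
    then show ?case using Phi_single[OF sS] hs by (simp only:)
  next
    case (inv h)
    then obtain s where sS: "s \<in> S" and hs: "h = psi S op s" by blast
    have hB: "h \<in> Bij S" using psi_Bij sS hs by simp
    have "set [s] \<subseteq> S" using sS by simp
    then have "Phi S op [s] \<in> G" by (rule G_I)
    then have hG: "h \<in> G" using Phi_single[OF sS] hs by (simp only:)
    define R where "R c = compose S c h" for c :: "'a \<Rightarrow> 'a"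
    have RG: "R ` G \<subseteq> G" unfolding R_def using G_compose hG by blast
    have him: "h ` S = S" using hB unfolding Bij_def by (simp add: bij_betw_def)
    have "inj_on R G"
    proof (rule inj_onI)
      fix c c' assume cG: "c \<in> G" "c' \<in> G" and e: "R c = R c'"
      show "c = c'"
      proof (rule extensionalityI)
        show "c \<in> extensional S" "c' \<in> extensional S"
          using cG G_Bij Bij_imp_extensional by auto
        fix y assume "y \<in> S"
        then have "y \<in> h ` S" using him by simp
        then obtain x where x: "x \<in> S" "h x = y" by auto
        have "c y = R c x" unfolding R_def using x by (simp add: compose_def)
        also have "\<dots> = R c' x" using e by simp
        also have "\<dots> = c' y" unfolding R_def using x by (simp add: compose_def)
        finally show "c y = c' y" .
      qed
    qed
    then have "R ` G = G" using endo_inj_surj[OF finite_G RG] by blast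
    moreover have "Phi S op [] \<in> G" by (rule G_I) simp
    ultimately have "Phi S op [] \<in> R ` G" by (simp only:)
    then obtain c where cG: "c \<in> G" and cR: "Phi S op [] = R c" by (rule imageE)
    have cB: "c \<in> Bij S" using cG G_Bij by blast
    have "c \<otimes>\<^bsub>BijGroup S\<^esub> h = \<one>\<^bsub>BijGroup S\<^esub>"
    proof -
      have "c \<otimes>\<^bsub>BijGroup S\<^esub> h = R c" using B_mult[OF cB hB] unfolding R_def .
      also have "\<dots> = Phi S op []" using cR by simp
      also have "\<dots> = \<one>\<^bsub>BijGroup S\<^esub>" by (simp add: BijGroup_def)
      finally show ?thesis .
    qed
    moreover have "h \<in> carrier (BijGroup S)" "c \<in> carrier (BijGroup S)" using hB cB by (simp_all add: BijGroup_def)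
    ultimately have "inv\<^bsub>BijGroup S\<^esub> h = c"
      by (rule group.inv_equality[OF group_BijGroup])
    then show ?case using cG by simp
  next
    case (eng h1 h2)
    have "h1 \<in> Bij S" "h2 \<in> Bij S" using eng.IH G_Bij by auto
    then have "h1 \<otimes>\<^bsub>BijGroup S\<^esub> h2 = compose S h1 h2" by (rule B_mult)
    then show ?case using G_compose[OF eng.IH] by (simp only:)
  qed
qed

lemma G_eq: "G = perm_group S op"
  using gen_sub_G G_sub_gen unfolding G_def by blast

lemma E_imp_pow:
  assumes E: "\<forall>s\<in>S. psik S op k s = (\<lambda>x\<in>S. x)" and xs: "set xs \<subseteq> S"
  shows "Phi S op xs [^]\<^bsub>A\<^esub> k = \<one>\<^bsub>A\<^esub>"
  using xs
proof (induction xs)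
  case Nil
  have e: "Phi S op [] = \<one>\<^bsub>A\<^esub>" by (simp add: A_simps)
  show ?case by (simp only: e AG.nat_pow_one)
next
  case (Cons s xs)
  have sS: "s \<in> S" and xsS: "set xs \<subseteq> S" using Cons by auto
  have s1: "set [s] \<subseteq> S" using sS by simp
  have c1: "Phi S op [s] \<in> carrier A" "Phi S op xs \<in> carrier A"
    unfolding A_simps by (rule G_I[OF s1], rule G_I[OF xsS])
  have "Phi S op (s # xs) = Phi S op [s] \<otimes>\<^bsub>A\<^esub> Phi S op xs" using mult_Phi[of "[s]" xs] sS xsS by simp
  then have "Phi S op (s # xs) [^]\<^bsub>A\<^esub> k = Phi S op [s] [^]\<^bsub>A\<^esub> k \<otimes>\<^bsub>A\<^esub> Phi S op xs [^]\<^bsub>A\<^esub> k"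
    using AG.pow_mult_distrib[OF AG.m_comm[OF c1] c1] by simp
  also have "\<dots> = \<one>\<^bsub>A\<^esub> \<otimes>\<^bsub>A\<^esub> \<one>\<^bsub>A\<^esub>"
  proof -
    have "Phi S op [s] [^]\<^bsub>A\<^esub> k = psik S op k s" using pow_single[OF sS] psik_eq[OF sS] by (simp only:)
    also have "\<dots> = (\<lambda>x\<in>S. x)" using E sS by blast
    also have "\<dots> = \<one>\<^bsub>A\<^esub>" by (simp add: A_simps)
    finally show ?thesis using Cons.IH[OF xsS] by (simp only:)
  qed
  also have "\<dots> = \<one>\<^bsub>A\<^esub>" by simp
  finally show ?case .
qed

lemma pow_imp_E:
  assumes "\<forall>x\<in>G. x [^]\<^bsub>A\<^esub> k = \<one>\<^bsub>A\<^esub>"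
  shows "\<forall>s\<in>S. psik S op k s = (\<lambda>x\<in>S. x)"
proof
  fix s assume sS: "s \<in> S"
  have "Phi S op [s] [^]\<^bsub>A\<^esub> k = \<one>\<^bsub>A\<^esub>" using assms G_I[of "[s]"] sS by auto
  then show "psik S op k s = (\<lambda>x\<in>S. x)" using pow_single[OF sS] psik_eq[OF sS] by (simp add: A_simps)
qed

lemma E_iff: "(\<forall>s\<in>S. psik S op k s = (\<lambda>x\<in>S. x)) \<longleftrightarrow> (\<forall>x\<in>G. x [^]\<^bsub>A\<^esub> k = \<one>\<^bsub>A\<^esub>)"
proof
  assume E: "\<forall>s\<in>S. psik S op k s = (\<lambda>x\<in>S. x)"
  show "\<forall>x\<in>G. x [^]\<^bsub>A\<^esub> k = \<one>\<^bsub>A\<^esub>"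
  proof
    fix x assume "x \<in> G"
    then obtain xs where "set xs \<subseteq> S" "x = Phi S op xs" by (rule G_E)
    then show "x [^]\<^bsub>A\<^esub> k = \<one>\<^bsub>A\<^esub>" using E_imp_pow[OF E] by simp
  qed
qed (rule pow_imp_E)

lemma main_loc:
  assumes cls: "is_class S op d"
  shows "(\<forall>p::nat. prime p \<longrightarrow> (p dvd d \<longleftrightarrow> p dvd card (perm_group S op)))
     \<and> d \<ge> 1 \<and> card (perm_group S op) \<ge> 1"
proof -
  define m where "m = order A"
  have mc: "m = card (perm_group S op)" unfolding m_def order_def A_simps G_eq ..
  have Gne: "Phi S op [] \<in> G" by (rule G_I) simp
  have m0: "m \<ge> 1" using finite_G Gne unfolding m_def order_def A_simps
    by (metis One_nat_def Suc_leI card_gt_0_iff empty_iff)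
  define P where "P k \<longleftrightarrow> k \<ge> 1 \<and> (\<forall>s\<in>S. psik S op k s = (\<lambda>x\<in>S. x))" for k
  have powm: "\<forall>x\<in>G. x [^]\<^bsub>A\<^esub> m = \<one>\<^bsub>A\<^esub>"
    using AG.pow_order_eq_1 unfolding m_def A_simps by metis
  have Pm: "P m" unfolding P_def E_iff using m0 powm by simp
  have dL: "d = (LEAST k. P k)" using cls unfolding is_class_def P_def by simp
  have Pd: "P d" using LeastI[of P m] Pm dL by simp
  have d1: "d \<ge> 1" using Pd unfolding P_def by simp
  have powd: "\<forall>x\<in>G. x [^]\<^bsub>A\<^esub> d = \<one>\<^bsub>A\<^esub>" using Pd unfolding P_def E_iff by simp
  have dm: "d dvd m"
  proof (rule ccontr)
    assume nd: "\<not> d dvd m"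
    define r where "r = m mod d"
    have r1: "r \<ge> 1" using nd unfolding r_def by (simp add: dvd_eq_mod_eq_0)
    have rd: "r < d" using d1 unfolding r_def by simp
    have "\<forall>x\<in>G. x [^]\<^bsub>A\<^esub> r = \<one>\<^bsub>A\<^esub>"
    proof
      fix x assume xG: "x \<in> G"
      then have xA: "x \<in> carrier A" unfolding A_simps .
      have "m = d * (m div d) + r" unfolding r_def by simp
      then have "x [^]\<^bsub>A\<^esub> m = x [^]\<^bsub>A\<^esub> (d * (m div d)) \<otimes>\<^bsub>A\<^esub> x [^]\<^bsub>A\<^esub> r"
        using AG.nat_pow_mult[OF xA] by metis
      also have "x [^]\<^bsub>A\<^esub> (d * (m div d)) = \<one>\<^bsub>A\<^esub>"
        using AG.nat_pow_pow[OF xA, of d "m div d", symmetric] powd xG by simp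
      finally have "\<one>\<^bsub>A\<^esub> = \<one>\<^bsub>A\<^esub> \<otimes>\<^bsub>A\<^esub> x [^]\<^bsub>A\<^esub> r" using powm xG by simp
      then show "x [^]\<^bsub>A\<^esub> r = \<one>\<^bsub>A\<^esub>" using AG.nat_pow_closed[OF xA] by simp
    qed
    then have "P r" unfolding P_def E_iff using r1 by simp
    then have "d \<le> r" unfolding dL by (rule Least_le)
    then show False using rd by simp
  qed
  have main: "p dvd d \<longleftrightarrow> p dvd m" if p: "prime p" for p :: nat
  proof
    assume "p dvd d" then show "p dvd m" using dm by (rule dvd_trans)
  next
    assume pm: "p dvd m"
    define a where "a = multiplicity p m"
    have mne: "m \<noteq> 0" using m0 by simp
    have pnu: "\<not> is_unit p" using prime_gt_1_nat[OF p] by simp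
    obtain q where mq: "m = p ^ a * q" unfolding a_def
      by (rule multiplicity_decompose'[OF mne pnu])
    have a0: "a > 0" unfolding a_def using p pm m0
      by (subst prime_multiplicity_gt_zero_iff) (auto simp: prime_imp_prime_elem)
    obtain H where H: "subgroup H A" "card H = p ^ a"
      using sylow_thm[OF p AG.is_group, of a q] mq finite_G unfolding m_def A_simps by blast
    have p2: "p \<ge> 2" using p by (rule prime_ge_2_nat)
    have "p ^ a \<ge> p ^ 1" using a0 p2 by (intro power_increasing) auto
    then have cH: "card H \<ge> 2" using H(2) p2 by simp
    have "\<exists>x\<in>H. x \<noteq> \<one>\<^bsub>A\<^esub>"
    proof (rule ccontr)
      assume "\<not> ?thesis"
      then have "H \<subseteq> {\<one>\<^bsub>A\<^esub>}" by blast
      then have "card H \<le> 1" using card_mono[of "{\<one>\<^bsub>A\<^esub>}" H] by simp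
      then show False using cH by simp
    qed
    then obtain x where xH: "x \<in> H" and x1: "x \<noteq> \<one>\<^bsub>A\<^esub>" by blast
    have xA: "x \<in> carrier A" using subgroup.mem_carrier[OF H(1) xH] .
    have HG: "group (A\<lparr>carrier := H\<rparr>)" by (rule subgroup.subgroup_is_group[OF H(1) AG.is_group])
    have "x [^]\<^bsub>A\<lparr>carrier := H\<rparr>\<^esub> order (A\<lparr>carrier := H\<rparr>) = \<one>\<^bsub>A\<lparr>carrier := H\<rparr>\<^esub>"
      by (rule group.pow_order_eq_1[OF HG]) (simp add: xH)
    then have "x [^]\<^bsub>A\<^esub> (p ^ a) = \<one>\<^bsub>A\<^esub>"
      using H(2) AG.nat_pow_consistent[of x "p ^ a" H] by (simp add: order_def)
    then have od: "AG.ord x dvd p ^ a" using AG.pow_eq_id[OF xA] by simp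
    have "AG.ord x \<noteq> 1"
    proof
      assume "AG.ord x = 1"
      then have "x [^]\<^bsub>A\<^esub> (1::nat) = \<one>\<^bsub>A\<^esub>" using AG.pow_eq_id[OF xA, of 1] by simp
      then show False using x1 xA by simp
    qed
    then obtain i where i: "i \<le> a" "AG.ord x = p ^ i" "i \<noteq> 0"
      using od divides_primepow_nat[OF p] by (metis power_0)
    then have "p dvd AG.ord x" by simp
    moreover have "AG.ord x dvd d"
    proof -
      have "x \<in> G" using xA by (simp add: A_simps)
      then have "x [^]\<^bsub>A\<^esub> d = \<one>\<^bsub>A\<^esub>" using powd by blast
      then show ?thesis using AG.pow_eq_id[OF xA, of d] by blast
    qed
    ultimately show "p dvd d" by (rule dvd_trans)
  qed
  show ?thesis using main d1 m0 mc by simp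
qed

end

lemma primepow_transfer:
  fixes a b :: nat
  assumes pos: "b > 0" and same: "\<forall>p. prime p \<longrightarrow> (p dvd a \<longleftrightarrow> p dvd b)" and pa: "primepow a"
  shows "primepow b"
proof -
  obtain p k where pk: "prime p" "k > 0" "a = p ^ k" using pa unfolding primepow_def by blast
  have pb: "p dvd b" using same pk by auto
  define e where "e = multiplicity p b"
  have bne: "b \<noteq> 0" using pos by simp
  have pnu: "\<not> is_unit p" using prime_gt_1_nat[OF pk(1)] by simp
  obtain y where y: "b = p ^ e * y" "\<not> p dvd y" unfolding e_def
    by (rule multiplicity_decompose'[OF bne pnu])
  have y1: "y = 1"
  proof (rule ccontr)
    assume "y \<noteq> 1"
    then obtain q where q: "prime q" "q dvd y" using prime_factor_nat by blast
    then have "q dvd b" using y(1) by simp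
    then have "q dvd p ^ k" using same q pk by auto
    then have "q dvd p" using q prime_dvd_power by blast
    then have "q = p" using q pk primes_dvd_imp_eq by blast
    then show False using q y by simp
  qed
  have e0: "e > 0" unfolding e_def using pk pb pos
    by (subst prime_multiplicity_gt_zero_iff) (auto simp: prime_imp_prime_elem)
  show ?thesis unfolding primepow_def using pk(1) e0 y y1 by auto
qed

theorem mainTheorem6:
  fixes S :: "'a set" and op :: "'a \<Rightarrow> 'a \<Rightarrow> 'a" and d :: nat
  assumes "finite S" and "cycle_set S op" and "is_class S op d"
  shows "(\<forall>p::nat. prime p \<longrightarrow> (p dvd d \<longleftrightarrow> p dvd card (perm_group S op)))
       \<and> (primepow d \<longleftrightarrow> primepow (card (perm_group S op)))"
proof -
  interpret cs S op by unfold_locales (use assms in auto)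
  have M: "(\<forall>p::nat. prime p \<longrightarrow> (p dvd d \<longleftrightarrow> p dvd card (perm_group S op)))
     \<and> d \<ge> 1 \<and> card (perm_group S op) \<ge> 1" by (rule main_loc[OF assms(3)])
  have "primepow d \<longleftrightarrow> primepow (card (perm_group S op))"
  proof
    assume "primepow d"
    then show "primepow (card (perm_group S op))"
      by (rule primepow_transfer[rotated 2]) (use M in auto)
  next
    assume "primepow (card (perm_group S op))"
    then show "primepow d"
      by (rule primepow_transfer[rotated 2]) (use M in auto)
  qed
  then show ?thesis using M by blast
qed

end
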